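(* Let $A\in\mathbb{R}^{n\times n}$ be symmetric positive definite, $B\in\mathbb{R}^{m\times n}$ and $C\in\mathbb{R}^{l\times m}$, and suppose that the matrix $\mathcal{A}$ defined below is singular. Then for every $\alpha>0$ the matrix $\mathcal{T}_\alpha$ defined below satisfies $\operatorname{index}(\mathcal{I}-\mathcal{T}_\alpha)=1$.
   Context: Let $\mathbf{n}=n+m+l$ and $\mathcal{I}$ be the $\mathbf{n}\times\mathbf{n}$ identity. Define $$\mathcal{A}=\begin{pmatrix}A&B^T&0\\-B&0&-C^T\\0&C&0\end{pmatrix},\quad \mathcal{A}_1=\begin{pmatrix}A&B^T&0\\-B&0&0\\0&0&0\end{pmatrix},\quad \mathcal{A}_2=\begin{pmatrix}0&0&0\\0&0&-C^T\\0&C&0\end{pmatrix},$$ so $\mathcal{A}=\mathcal{A}_1+\mathcal{A}_2$. For $\alpha>0$ the APSS iteration matrix is $$\mathcal{T}_\alpha=(\alpha\mathcal{I}+\mathcal{A}_2)^{-1}(\alpha\mathcal{I}-\mathcal{A}_1)(\alpha\mathcal{I}+\mathcal{A}_1)^{-1}(\alpha\mathcal{I}-\mathcal{A}_2).$$ The index of a square matrix $M$ is the smallest nonnegative integer $k$ such that $\operatorname{rank}(M^{k+1})=\operatorname{rank}(M^k)$. *)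

theory Defs
  imports "Jordan_Normal_Form.Matrix" "Jordan_Normal_Form.DL_Rank"
begin

(* horizontal concatenation [X, Y] of two matrices with the same number of rows *)
definition append_cols :: "'a::zero mat \<Rightarrow> 'a mat \<Rightarrow> 'a mat" where
  "append_cols X Y = four_block_mat X Y (0\<^sub>m 0 (dim_col X)) (0\<^sub>m 0 (dim_col Y))"

definition block3 :: "'a::zero mat \<Rightarrow> 'a mat \<Rightarrow> 'a mat \<Rightarrow> 'a mat \<Rightarrow> 'a mat \<Rightarrow> 'a mat
    \<Rightarrow> 'a mat \<Rightarrow> 'a mat \<Rightarrow> 'a mat \<Rightarrow> 'a mat" where
  "block3 A11 A12 A13 A21 A22 A23 A31 A32 A33 =
     four_block_mat (four_block_mat A11 A12 A21 A22) (A13 @\<^sub>r A23) (append_cols A31 A32) A33"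

definition sym_pos_def :: "nat \<Rightarrow> real mat \<Rightarrow> bool" where
  "sym_pos_def n A \<longleftrightarrow> A \<in> carrier_mat n n \<and> transpose_mat A = A \<and>
     (\<forall>x \<in> carrier_vec n. x \<noteq> 0\<^sub>v n \<longrightarrow> x \<bullet> (A *\<^sub>v x) > 0)"

definition mat_inv :: "'a::field mat \<Rightarrow> 'a mat" where
  "mat_inv M = (SOME B. B \<in> carrier_mat (dim_row M) (dim_row M) \<and> inverts_mat M B \<and> inverts_mat B M)"

definition mat_index :: "'a::field mat \<Rightarrow> nat" where
  "mat_index M = (LEAST k. vec_space.rank (dim_row M) (M ^\<^sub>m (k+1))
                          = vec_space.rank (dim_row M) (M ^\<^sub>m k))"

definition calA :: "nat \<Rightarrow> nat \<Rightarrow> nat \<Rightarrow> real mat \<Rightarrow> real mat \<Rightarrow> real mat \<Rightarrow> real mat" where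
  "calA n m l A B C = block3
     A (transpose_mat B) (0\<^sub>m n l)
     (- B) (0\<^sub>m m m) (- transpose_mat C)
     (0\<^sub>m l n) C (0\<^sub>m l l)"

definition calA1 :: "nat \<Rightarrow> nat \<Rightarrow> nat \<Rightarrow> real mat \<Rightarrow> real mat \<Rightarrow> real mat" where
  "calA1 n m l A B = block3
     A (transpose_mat B) (0\<^sub>m n l)
     (- B) (0\<^sub>m m m) (0\<^sub>m m l)
     (0\<^sub>m l n) (0\<^sub>m l m) (0\<^sub>m l l)"

definition calA2 :: "nat \<Rightarrow> nat \<Rightarrow> nat \<Rightarrow> real mat \<Rightarrow> real mat" where
  "calA2 n m l C = block3
     (0\<^sub>m n n) (0\<^sub>m n m) (0\<^sub>m n l)
     (0\<^sub>m m n) (0\<^sub>m m m) (- transpose_mat C)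
     (0\<^sub>m l n) C (0\<^sub>m l l)"

definition T_apss :: "nat \<Rightarrow> nat \<Rightarrow> nat \<Rightarrow> real mat \<Rightarrow> real mat \<Rightarrow> real mat \<Rightarrow> real \<Rightarrow> real mat" where
  "T_apss n m l A B C \<alpha> =
    (let N = n + m + l; I = 1\<^sub>m N; A1 = calA1 n m l A B; A2 = calA2 n m l C in
     mat_inv (\<alpha> \<cdot>\<^sub>m I + A2) * (\<alpha> \<cdot>\<^sub>m I - A1) * mat_inv (\<alpha> \<cdot>\<^sub>m I + A1) * (\<alpha> \<cdot>\<^sub>m I - A2))"

end

theory Submission
  imports Defs
begin


lemma (in vec_space) rank_nullity_mat:
  assumes A: "A \<in> carrier_mat n n"
  shows "rank A + vectorspace.dim class_ring (vs {x \<in> carrier_vec n. A *\<^sub>v x = 0\<^sub>v n}) = n"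
proof -
  interpret lm: linear_map class_ring V V "(*\<^sub>v) A"
  proof (unfold_locales)
    show "(*\<^sub>v) A \<in> LinearCombinations.module_hom class_ring V V"
      unfolding LinearCombinations.module_hom_def using A
      by (auto simp: mult_add_distrib_mat_vec mult_mat_vec)
  qed
  have rn: "vectorspace.dim class_ring (vs lm.imT) + vectorspace.dim class_ring (vs lm.kerT) = n"
    using lm.rank_nullity[OF fin_dim] dim_is_n by simp
  have im: "lm.imT = span (set (cols A))"
    using col_space_eq[OF A] A unfolding col_space_def mod_hom.im_def[OF lm.mod_hom_axioms] by auto
  have ker: "lm.kerT = {x \<in> carrier_vec n. A *\<^sub>v x = 0\<^sub>v n}"
    unfolding mod_hom.ker_def[OF lm.mod_hom_axioms] by auto
  show ?thesis using rn unfolding im ker rank_def by simp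
qed

lemma (in vec_space) rank_sq:
  assumes A: "A \<in> carrier_mat n n"
    and k: "\<And>x. x \<in> carrier_vec n \<Longrightarrow> A *\<^sub>v (A *\<^sub>v x) = 0\<^sub>v n \<Longrightarrow> A *\<^sub>v x = 0\<^sub>v n"
  shows "rank (A * A) = rank A"
proof -
  have AA: "A * A \<in> carrier_mat n n" using A by auto
  have "{x \<in> carrier_vec n. (A * A) *\<^sub>v x = 0\<^sub>v n} = {x \<in> carrier_vec n. A *\<^sub>v x = 0\<^sub>v n}"
    using k A by (auto simp: assoc_mult_mat_vec)
  then show ?thesis using rank_nullity_mat[OF A] rank_nullity_mat[OF AA] by simp
qed

lemma unit_ex:
  fixes M :: "'a::field mat"
  assumes M: "M \<in> carrier_mat N N" and d: "det M \<noteq> 0"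
  shows "\<exists>B\<in>carrier_mat N N. M * B = 1\<^sub>m N \<and> B * M = 1\<^sub>m N"
  using det_non_zero_imp_unit[OF M d, of "()"] unfolding Units_def ring_mat_def by auto

lemma inv_from_ker:
  fixes M :: "'a::field mat"
  assumes M: "M \<in> carrier_mat N N" and k: "\<And>x. x \<in> carrier_vec N \<Longrightarrow> M *\<^sub>v x = 0\<^sub>v N \<Longrightarrow> x = 0\<^sub>v N"
  shows "\<exists>B\<in>carrier_mat N N. M * B = 1\<^sub>m N \<and> B * M = 1\<^sub>m N"
  using unit_ex[OF M] det_0_iff_vec_prod_zero_field[OF M] k by blast

lemma mat_inv_props:
  fixes M :: "'a::field mat"
  assumes M: "M \<in> carrier_mat N N" and ex: "\<exists>B\<in>carrier_mat N N. M * B = 1\<^sub>m N \<and> B * M = 1\<^sub>m N"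
  shows "mat_inv M \<in> carrier_mat N N \<and> M * mat_inv M = 1\<^sub>m N \<and> mat_inv M * M = 1\<^sub>m N"
proof -
  have "\<exists>B. B \<in> carrier_mat (dim_row M) (dim_row M) \<and> inverts_mat M B \<and> inverts_mat B M"
    using ex M unfolding inverts_mat_def by auto
  from someI_ex[OF this] show ?thesis using M unfolding mat_inv_def inverts_mat_def by auto
qed

lemma not_inv_ker:
  fixes M :: "'a::field mat"
  assumes M: "M \<in> carrier_mat N N" and ni: "\<not> invertible_mat M"
  shows "\<exists>v. v \<in> carrier_vec N \<and> v \<noteq> 0\<^sub>v N \<and> M *\<^sub>v v = 0\<^sub>v N"
proof -
  have "det M = 0"
  proof (rule ccontr)
    assume "det M \<noteq> 0"
    from unit_ex[OF M this] obtain B where "B \<in> carrier_mat N N" "M * B = 1\<^sub>m N" "B * M = 1\<^sub>m N" by auto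
    then have "invertible_mat M" using M unfolding invertible_mat_def inverts_mat_def square_mat.simps by auto
    with ni show False by simp
  qed
  then show ?thesis using det_0_iff_vec_prod_zero_field[OF M] by auto
qed



lemma smult_mat_vec_assoc:
  assumes "A \<in> carrier_mat nr nc" "v \<in> carrier_vec nc"
  shows "(k \<cdot>\<^sub>m A) *\<^sub>v v = k \<cdot>\<^sub>v (A *\<^sub>v v)"
  using assms by (intro eq_vecI) (auto simp: scalar_prod_def sum_distrib_left mult.assoc)

lemma self_scalar_nonneg: "(x :: real vec) \<bullet> x \<ge> 0"
  unfolding scalar_prod_def by (auto intro: sum_nonneg)

lemma self_scalar_zero:
  assumes x: "(x :: real vec) \<in> carrier_vec N" and z: "x \<bullet> x = 0"
  shows "x = 0\<^sub>v N"
proof (rule eq_vecI)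
  have "\<forall>i\<in>{0..<dim_vec x}. x $ i * x $ i = 0"
    using z unfolding scalar_prod_def by (subst sum_nonneg_eq_0_iff[symmetric]) auto
  then show "\<And>i. i < dim_vec (0\<^sub>v N) \<Longrightarrow> x $ i = 0\<^sub>v N $ i" using x by auto
  show "dim_vec x = dim_vec (0\<^sub>v N)" using x by auto
qed



lemma mat_vec_zero: "(K :: 'a::comm_semiring_1 mat) \<in> carrier_mat nr nc \<Longrightarrow> K *\<^sub>v 0\<^sub>v nc = 0\<^sub>v nr"
  by (intro eq_vecI) (auto simp: scalar_prod_def)

lemma smult_vec_zero: "(k :: 'a::comm_semiring_1) \<cdot>\<^sub>v 0\<^sub>v n = 0\<^sub>v n"
  by (intro eq_vecI) auto

lemma core:
  fixes A1 A2 :: "real mat" and \<alpha> :: real and v :: "real vec"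
  assumes A1: "A1 \<in> carrier_mat N N" and A2: "A2 \<in> carrier_mat N N" and a: "\<alpha> > 0"
    and F1: "\<And>x. x \<in> carrier_vec N \<Longrightarrow> x \<bullet> (A1 *\<^sub>v x) \<ge> 0"
    and F2: "\<And>x. x \<in> carrier_vec N \<Longrightarrow> x \<bullet> (A1 *\<^sub>v x) = 0 \<Longrightarrow> transpose_mat A1 *\<^sub>v x = - (A1 *\<^sub>v x)"
    and F3: "transpose_mat A2 = - A2"
    and v: "v \<in> carrier_vec N" "v \<noteq> 0\<^sub>v N" "(A1 + A2) *\<^sub>v v = 0\<^sub>v N"
  shows "mat_index (1\<^sub>m N - (mat_inv (\<alpha> \<cdot>\<^sub>m 1\<^sub>m N + A2) * (\<alpha> \<cdot>\<^sub>m 1\<^sub>m N - A1)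
          * mat_inv (\<alpha> \<cdot>\<^sub>m 1\<^sub>m N + A1) * (\<alpha> \<cdot>\<^sub>m 1\<^sub>m N - A2))) = 1"
proof -
  define I :: "real mat" where "I = 1\<^sub>m N"
  define M1 where "M1 = \<alpha> \<cdot>\<^sub>m I + A1"
  define M2 where "M2 = \<alpha> \<cdot>\<^sub>m I + A2"
  define P1 where "P1 = \<alpha> \<cdot>\<^sub>m I - A1"
  define P2 where "P2 = \<alpha> \<cdot>\<^sub>m I - A2"
  define AA where "AA = A1 + A2"
  have I: "I \<in> carrier_mat N N" unfolding I_def by simp
  have M1c: "M1 \<in> carrier_mat N N" and M2c: "M2 \<in> carrier_mat N N" and P1c: "P1 \<in> carrier_mat N N"
    and P2c: "P2 \<in> carrier_mat N N" and AAc: "AA \<in> carrier_mat N N"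
    unfolding M1_def M2_def P1_def P2_def AA_def using A1 A2 I by auto
  have M1v: "M1 *\<^sub>v x = \<alpha> \<cdot>\<^sub>v x + A1 *\<^sub>v x" if "x \<in> carrier_vec N" for x
    unfolding M1_def using that A1 I by (simp add: add_mult_distrib_mat_vec[of _ N N] smult_mat_vec_assoc[of _ N N] I_def)
  have M2v: "M2 *\<^sub>v x = \<alpha> \<cdot>\<^sub>v x + A2 *\<^sub>v x" if "x \<in> carrier_vec N" for x
    unfolding M2_def using that A2 I by (simp add: add_mult_distrib_mat_vec[of _ N N] smult_mat_vec_assoc[of _ N N] I_def)
  have P1v: "P1 *\<^sub>v x = \<alpha> \<cdot>\<^sub>v x - A1 *\<^sub>v x" if "x \<in> carrier_vec N" for x
    unfolding P1_def using that A1 I by (simp add: minus_mult_distrib_mat_vec[of _ N N] smult_mat_vec_assoc[of _ N N] I_def)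
  have P2v: "P2 *\<^sub>v x = \<alpha> \<cdot>\<^sub>v x - A2 *\<^sub>v x" if "x \<in> carrier_vec N" for x
    unfolding P2_def using that A2 I by (simp add: minus_mult_distrib_mat_vec[of _ N N] smult_mat_vec_assoc[of _ N N] I_def)
  have AAv: "AA *\<^sub>v x = A1 *\<^sub>v x + A2 *\<^sub>v x" if "x \<in> carrier_vec N" for x
    unfolding AA_def using that A1 A2 by (simp add: add_mult_distrib_mat_vec[of _ N N])
  have A2T: "transpose_mat A2 *\<^sub>v x = - (A2 *\<^sub>v x)" if "x \<in> carrier_vec N" for x
    using that A2 unfolding F3 by simp
  have skew: "x \<bullet> (A2 *\<^sub>v x) = 0" if x: "x \<in> carrier_vec N" for x
  proof -
    have "(transpose_mat A2 *\<^sub>v x) \<bullet> x = x \<bullet> (A2 *\<^sub>v x)"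
      by (rule transpose_vec_mult_scalar[OF A2 x x])
    also have "(transpose_mat A2 *\<^sub>v x) \<bullet> x = - ((A2 *\<^sub>v x) \<bullet> x)"
      using A2T[OF x] x A2 by simp
    also have "(A2 *\<^sub>v x) \<bullet> x = x \<bullet> (A2 *\<^sub>v x)"
      using x A2 by (intro comm_scalar_prod[of _ N]) auto
    finally show ?thesis by simp
  qed
  have M1ker: "x = 0\<^sub>v N" if x: "x \<in> carrier_vec N" and e: "M1 *\<^sub>v x = 0\<^sub>v N" for x
  proof -
    have "0 = x \<bullet> (M1 *\<^sub>v x)" using e x by simp
    also have "\<dots> = \<alpha> * (x \<bullet> x) + x \<bullet> (A1 *\<^sub>v x)"
      using x A1 by (simp add: M1v scalar_prod_add_distrib[of _ N])
    finally have "\<alpha> * (x \<bullet> x) \<le> 0" using F1[OF x] by linarith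
    then have "x \<bullet> x = 0" using a self_scalar_nonneg[of x]
      by (simp add: mult_le_0_iff) 
    then show ?thesis using self_scalar_zero[OF x] by simp
  qed
  have M2ker: "x = 0\<^sub>v N" if x: "x \<in> carrier_vec N" and e: "M2 *\<^sub>v x = 0\<^sub>v N" for x
  proof -
    have "0 = x \<bullet> (M2 *\<^sub>v x)" using e x by simp
    also have "\<dots> = \<alpha> * (x \<bullet> x)"
      using x A2 skew[OF x] by (simp add: M2v scalar_prod_add_distrib[of _ N])
    finally have "x \<bullet> x = 0" using a by simp
    then show ?thesis using self_scalar_zero[OF x] by simp
  qed
  obtain M1i where M1i: "M1i \<in> carrier_mat N N" "M1 * M1i = 1\<^sub>m N" "M1i * M1 = 1\<^sub>m N"
    and M1i_def: "M1i = mat_inv M1"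
    using mat_inv_props[OF M1c inv_from_ker[OF M1c M1ker]] by blast
  obtain M2i where M2i: "M2i \<in> carrier_mat N N" "M2 * M2i = 1\<^sub>m N" "M2i * M2 = 1\<^sub>m N"
    and M2i_def: "M2i = mat_inv M2"
    using mat_inv_props[OF M2c inv_from_ker[OF M2c M2ker]] by blast
  have M1M1i: "M1 *\<^sub>v (M1i *\<^sub>v x) = x" "M1i *\<^sub>v (M1 *\<^sub>v x) = x" if "x \<in> carrier_vec N" for x
    using that M1i M1c by (simp_all add: assoc_mult_mat_vec[symmetric, of _ N N _ N])
  have M2M2i: "M2 *\<^sub>v (M2i *\<^sub>v x) = x" "M2i *\<^sub>v (M2 *\<^sub>v x) = x" if "x \<in> carrier_vec N" for x
    using that M2i M2c by (simp_all add: assoc_mult_mat_vec[symmetric, of _ N N _ N])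
  define T where "T = M2i * P1 * M1i * P2"
  define MM where "MM = I - T"
  have Tc: "T \<in> carrier_mat N N" unfolding T_def using M1i M2i P1c P2c by auto
  have MMc: "MM \<in> carrier_mat N N" unfolding MM_def using Tc I by auto
  have goal_eq: "1\<^sub>m N - (mat_inv (\<alpha> \<cdot>\<^sub>m 1\<^sub>m N + A2) * (\<alpha> \<cdot>\<^sub>m 1\<^sub>m N - A1)
          * mat_inv (\<alpha> \<cdot>\<^sub>m 1\<^sub>m N + A1) * (\<alpha> \<cdot>\<^sub>m 1\<^sub>m N - A2)) = MM"
    unfolding MM_def T_def M1i_def M2i_def M1_def M2_def P1_def P2_def I_def ..
  have Tv: "T *\<^sub>v x = M2i *\<^sub>v (P1 *\<^sub>v (M1i *\<^sub>v (P2 *\<^sub>v x)))" if "x \<in> carrier_vec N" for x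
  proof -
    have c1: "M2i * P1 * M1i \<in> carrier_mat N N" "M2i * P1 \<in> carrier_mat N N" using M1i M2i P1c by auto
    have "T *\<^sub>v x = (M2i * P1 * M1i) *\<^sub>v (P2 *\<^sub>v x)"
      unfolding T_def by (rule assoc_mult_mat_vec[OF c1(1) P2c that])
    also have "\<dots> = (M2i * P1) *\<^sub>v (M1i *\<^sub>v (P2 *\<^sub>v x))"
      by (rule assoc_mult_mat_vec[OF c1(2) M1i(1)], insert P2c that, auto)
    also have "\<dots> = M2i *\<^sub>v (P1 *\<^sub>v (M1i *\<^sub>v (P2 *\<^sub>v x)))"
      by (rule assoc_mult_mat_vec[OF M2i(1) P1c], insert P2c that M1i, auto)
    finally show ?thesis .
  qed
  have MMv: "MM *\<^sub>v x = x - T *\<^sub>v x" if "x \<in> carrier_vec N" for x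
    unfolding MM_def using that I Tc by (simp add: minus_mult_distrib_mat_vec[of _ N N] I_def)
  have key: "MM *\<^sub>v x = (2*\<alpha>) \<cdot>\<^sub>v (M2i *\<^sub>v (M1i *\<^sub>v (AA *\<^sub>v x)))" if x: "x \<in> carrier_vec N" for x
  proof -
    define p where "p = P2 *\<^sub>v x"
    define q where "q = M1i *\<^sub>v p"
    have pc: "p \<in> carrier_vec N" unfolding p_def using P2c x by simp
    have qc: "q \<in> carrier_vec N" unfolding q_def using M1i pc by simp
    have Mq: "\<alpha> \<cdot>\<^sub>v q + A1 *\<^sub>v q = p" using M1M1i(1)[OF pc] M1v[OF qc] unfolding q_def by simp
    have e1: "P1 *\<^sub>v q = (2*\<alpha>) \<cdot>\<^sub>v q - p"
    proof (rule eq_vecI)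
      fix i assume "i < dim_vec ((2*\<alpha>) \<cdot>\<^sub>v q - p)"
      then have i: "i < N" using pc by simp
      have "(\<alpha> \<cdot>\<^sub>v q + A1 *\<^sub>v q) $ i = p $ i" using Mq by simp
      then have "\<alpha> * q $ i + (A1 *\<^sub>v q) $ i = p $ i" using i qc A1 by simp
      then show "(P1 *\<^sub>v q) $ i = ((2*\<alpha>) \<cdot>\<^sub>v q - p) $ i"
        using i qc pc A1 P1v[OF qc] by simp
    qed (use P1c pc in simp)
    have e2: "p = (2*\<alpha>) \<cdot>\<^sub>v x - M2 *\<^sub>v x"
      unfolding p_def using x A2 by (intro eq_vecI) (simp_all add: P2v M2v)
    have e3: "M1 *\<^sub>v x - p = AA *\<^sub>v x"
      unfolding p_def using x A1 A2 by (intro eq_vecI) (simp_all add: P2v M1v AAv)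
    have M1xc: "M1 *\<^sub>v x \<in> carrier_vec N" using M1c x by simp
    have r: "M1i *\<^sub>v (AA *\<^sub>v x) = x - q"
      unfolding e3[symmetric] q_def
      using mult_minus_distrib_mat_vec[OF M1i(1) M1xc pc] M1M1i(2)[OF x] by simp
    have M2ip: "M2i *\<^sub>v p = (2*\<alpha>) \<cdot>\<^sub>v (M2i *\<^sub>v x) - x"
    proof -
      have "M2i *\<^sub>v p = M2i *\<^sub>v ((2*\<alpha>) \<cdot>\<^sub>v x) - M2i *\<^sub>v (M2 *\<^sub>v x)"
        unfolding e2 by (rule mult_minus_distrib_mat_vec[OF M2i(1)], insert x M2c, auto)
      also have "\<dots> = (2*\<alpha>) \<cdot>\<^sub>v (M2i *\<^sub>v x) - x"
        using M2M2i(2)[OF x] mult_mat_vec[OF M2i(1) x] by simp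
      finally show ?thesis .
    qed
    have Tx: "T *\<^sub>v x = (2*\<alpha>) \<cdot>\<^sub>v (M2i *\<^sub>v q) - ((2*\<alpha>) \<cdot>\<^sub>v (M2i *\<^sub>v x) - x)"
    proof -
      have "T *\<^sub>v x = M2i *\<^sub>v ((2*\<alpha>) \<cdot>\<^sub>v q - p)"
        using Tv[OF x] e1 unfolding q_def p_def by simp
      also have "\<dots> = M2i *\<^sub>v ((2*\<alpha>) \<cdot>\<^sub>v q) - M2i *\<^sub>v p"
        by (rule mult_minus_distrib_mat_vec[OF M2i(1)], insert qc pc, auto)
      also have "\<dots> = (2*\<alpha>) \<cdot>\<^sub>v (M2i *\<^sub>v q) - ((2*\<alpha>) \<cdot>\<^sub>v (M2i *\<^sub>v x) - x)"
        using M2ip mult_mat_vec[OF M2i(1) qc] by simp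
      finally show ?thesis .
    qed
    have "M2i *\<^sub>v (x - q) = M2i *\<^sub>v x - M2i *\<^sub>v q"
      by (rule mult_minus_distrib_mat_vec[OF M2i(1) x qc])
    then show ?thesis unfolding r MMv[OF x] Tx using x qc M2i
      by (intro eq_vecI) (simp_all add: algebra_simps)
  qed
  have K1: "MM *\<^sub>v x = 0\<^sub>v N \<longleftrightarrow> AA *\<^sub>v x = 0\<^sub>v N" if x: "x \<in> carrier_vec N" for x
  proof
    assume "AA *\<^sub>v x = 0\<^sub>v N"
    then show "MM *\<^sub>v x = 0\<^sub>v N" unfolding key[OF x] using M1i M2i by (simp add: mat_vec_zero smult_vec_zero)
  next
    assume e: "MM *\<^sub>v x = 0\<^sub>v N"
    define w where "w = M1i *\<^sub>v (AA *\<^sub>v x)"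
    have wc: "w \<in> carrier_vec N" unfolding w_def using M1i AAc x by simp
    have "(2*\<alpha>) \<cdot>\<^sub>v (M2i *\<^sub>v w) = 0\<^sub>v N" using e key[OF x] unfolding w_def by simp
    then have h: "((2*\<alpha>) \<cdot>\<^sub>v (M2i *\<^sub>v w)) $ i = 0" if "i < N" for i
      using that by simp
    have "M2i *\<^sub>v w = 0\<^sub>v N"
    proof (rule eq_vecI)
      fix i assume "i < dim_vec (0\<^sub>v N)"
      then have i: "i < N" by simp
      from h[OF i] i M2i wc a show "(M2i *\<^sub>v w) $ i = 0\<^sub>v N $ i" by simp
    qed (use M2i in simp)
    then have "w = 0\<^sub>v N" using M2M2i(1)[OF wc] M2c by (simp add: mat_vec_zero)
    then show "AA *\<^sub>v x = 0\<^sub>v N" using M1M1i(1)[of "AA *\<^sub>v x"] AAc x M1c unfolding w_def by (simp add: mat_vec_zero)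
  qed
  have K2: "MM *\<^sub>v x = 0\<^sub>v N" if x: "x \<in> carrier_vec N" and e: "MM *\<^sub>v (MM *\<^sub>v x) = 0\<^sub>v N" for x
  proof -
    define z where "z = MM *\<^sub>v x"
    have zc: "z \<in> carrier_vec N" unfolding z_def using MMc x by simp
    have AAz: "AA *\<^sub>v z = 0\<^sub>v N" using K1[OF zc] e unfolding z_def by simp
    define g where "g = A1 *\<^sub>v z"
    have gc: "g \<in> carrier_vec N" unfolding g_def using A1 zc by simp
    have A2z: "A2 *\<^sub>v z = - g"
    proof (rule eq_vecI)
      fix i assume "i < dim_vec (- g)"
      then have i: "i < N" using gc by simp
      have "(AA *\<^sub>v z) $ i = 0" using AAz i by simp
      then show "(A2 *\<^sub>v z) $ i = (- g) $ i" using AAv[OF zc] i A1 A2 zc unfolding g_def by simp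
    qed (use A2 gc in simp)
    have zg: "z \<bullet> g = 0"
    proof -
      have "0 = z \<bullet> (AA *\<^sub>v z)" using AAz zc by simp
      also have "\<dots> = z \<bullet> g + z \<bullet> (A2 *\<^sub>v z)"
        unfolding AAv[OF zc] g_def using zc A1 A2 by (simp add: scalar_prod_add_distrib[of _ N])
      finally show ?thesis using skew[OF zc] by simp
    qed
    have A1T: "transpose_mat A1 *\<^sub>v z = - g" using F2[OF zc] zg unfolding g_def by simp
    have AATz: "transpose_mat AA *\<^sub>v z = 0\<^sub>v N"
    proof -
      have "transpose_mat AA *\<^sub>v z = transpose_mat A1 *\<^sub>v z + transpose_mat A2 *\<^sub>v z"
        unfolding AA_def transpose_add[OF A1 A2] using A1 A2 zc by (simp add: add_mult_distrib_mat_vec[of _ N N])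
      also have "\<dots> = - g + g" unfolding A1T A2T[OF zc] A2z using gc by simp
      also have "\<dots> = 0\<^sub>v N" using gc by (intro eq_vecI) auto
      finally show ?thesis .
    qed
    define w where "w = M1i *\<^sub>v (AA *\<^sub>v x)"
    have wc: "w \<in> carrier_vec N" unfolding w_def using M1i AAc x by simp
    have zw: "z = (2*\<alpha>) \<cdot>\<^sub>v (M2i *\<^sub>v w)" unfolding z_def w_def key[OF x] ..
    define u where "u = M2 *\<^sub>v z"
    have uc: "u \<in> carrier_vec N" unfolding u_def using M2c zc by simp
    have u1: "u = (2*\<alpha>) \<cdot>\<^sub>v w" unfolding u_def zw
      using mult_mat_vec[OF M2c, of "M2i *\<^sub>v w" "2*\<alpha>"] M2i wc M2M2i(1)[OF wc] by simp
    have "M1 *\<^sub>v u = (2*\<alpha>) \<cdot>\<^sub>v (AA *\<^sub>v x)" unfolding u1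
      using mult_mat_vec[OF M1c wc, of "2*\<alpha>"] M1M1i(1)[of "AA *\<^sub>v x"] AAc x unfolding w_def by simp
    then have lhs: "z \<bullet> (M1 *\<^sub>v u) = 0"
      using transpose_vec_mult_scalar[OF AAc x zc] AATz zc x AAc by simp
    have u2: "u = \<alpha> \<cdot>\<^sub>v z - g" unfolding u_def M2v[OF zc] A2z using zc gc
      by (intro eq_vecI) auto
    have zu: "z \<bullet> u = \<alpha> * (z \<bullet> z)" unfolding u2
      using scalar_prod_minus_distrib[of z N "\<alpha> \<cdot>\<^sub>v z" g] zc gc zg by simp
    have gz: "g \<bullet> z = 0" using zg comm_scalar_prod[OF gc zc] by simp
    have gu: "g \<bullet> u = - (g \<bullet> g)" unfolding u2
      using scalar_prod_minus_distrib[of g N "\<alpha> \<cdot>\<^sub>v z" g] zc gc gz by simp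
    have "z \<bullet> (M1 *\<^sub>v u) = \<alpha> * (z \<bullet> u) + z \<bullet> (A1 *\<^sub>v u)"
      using uc zc A1 by (simp add: M1v scalar_prod_add_distrib[of _ N])
    also have "z \<bullet> (A1 *\<^sub>v u) = (transpose_mat A1 *\<^sub>v z) \<bullet> u"
      using transpose_vec_mult_scalar[OF A1 uc zc] by simp
    also have "\<dots> = - (g \<bullet> u)" unfolding A1T using gc uc by simp
    finally have "z \<bullet> (M1 *\<^sub>v u) = \<alpha> * (\<alpha> * (z \<bullet> z)) + g \<bullet> g" unfolding zu gu by simp
    with lhs have eq0: "\<alpha> * (\<alpha> * (z \<bullet> z)) + g \<bullet> g = 0" by simp
    have "\<alpha> * (\<alpha> * (z \<bullet> z)) \<ge> 0" using a self_scalar_nonneg[of z] by simp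
    then have "\<alpha> * (\<alpha> * (z \<bullet> z)) = 0" using eq0 self_scalar_nonneg[of g] by linarith
    then have "z \<bullet> z = 0" using a by simp
    then show ?thesis using self_scalar_zero[OF zc] unfolding z_def by simp
  qed
  have MMv0: "MM *\<^sub>v v = 0\<^sub>v N" using K1[OF v(1)] v(3) unfolding AA_def by simp
  have "det MM = 0" using det_0_iff_vec_prod_zero_field[OF MMc] v MMv0 by blast
  then have r1: "vec_space.rank N MM \<noteq> N" using vec_space.det_rank_iff[OF MMc] by simp
  have r0: "vec_space.rank N (1\<^sub>m N :: real mat) = N" using vec_space.det_rank_iff[of "1\<^sub>m N :: real mat" N] by simp
  have dMM: "dim_row MM = N" using MMc by simp
  have p0: "MM ^\<^sub>m 0 = 1\<^sub>m N" using dMM by simp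
  have p1: "MM ^\<^sub>m 1 = MM" using MMc by simp
  have p2: "MM ^\<^sub>m 2 = MM * MM" using MMc by (simp add: numeral_2_eq_2)
  have r2: "vec_space.rank N (MM * MM) = vec_space.rank N MM"
    by (rule vec_space.rank_sq[OF MMc K2])
  have "(LEAST k. vec_space.rank N (MM ^\<^sub>m (k+1)) = vec_space.rank N (MM ^\<^sub>m k)) = 1"
  proof (rule Least_equality)
    show "vec_space.rank N (MM ^\<^sub>m (1+1)) = vec_space.rank N (MM ^\<^sub>m 1)"
      using p1 p2 r2 by (simp add: one_add_one)
    fix y assume "vec_space.rank N (MM ^\<^sub>m (y+1)) = vec_space.rank N (MM ^\<^sub>m y)"
    then show "1 \<le> y" using p0 p1 r0 r1 by (cases y) auto
  qed
  then show ?thesis unfolding goal_eq mat_index_def dMM .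
qed


lemma calA1_idx:
  assumes "A \<in> carrier_mat n n" "B \<in> carrier_mat m n" "i < n+m+l" "j < n+m+l"
  shows "calA1 n m l A B $$ (i,j) = (if i < n \<and> j < n then A $$ (i,j) else
     if i < n \<and> j < n + m then B $$ (j - n, i) else if n \<le> i \<and> i < n+m \<and> j < n then - B $$ (i-n,j) else 0)"
  using assms unfolding calA1_def block3_def append_cols_def
  by (auto simp: index_mat_four_block append_rows_def)

lemma calA2_idx:
  assumes "C \<in> carrier_mat l m" "i < n+m+l" "j < n+m+l"
  shows "calA2 n m l C $$ (i,j) = (if n \<le> i \<and> i < n+m \<and> n+m \<le> j then - C $$ (j-n-m, i-n) else
     if n+m \<le> i \<and> n \<le> j \<and> j < n+m then C $$ (i-n-m, j-n) else 0)"
  using assms unfolding calA2_def block3_def append_cols_def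
  by (auto simp: index_mat_four_block append_rows_def)

lemma calA_idx:
  assumes "A \<in> carrier_mat n n" "B \<in> carrier_mat m n" "C \<in> carrier_mat l m" "i < n+m+l" "j < n+m+l"
  shows "calA n m l A B C $$ (i,j) = (if i < n \<and> j < n then A $$ (i,j) else
     if i < n \<and> j < n + m then B $$ (j - n, i) else if n \<le> i \<and> i < n+m \<and> j < n then - B $$ (i-n,j) else
     if n \<le> i \<and> i < n+m \<and> n+m \<le> j then - C $$ (j-n-m, i-n) else
     if n+m \<le> i \<and> n \<le> j \<and> j < n+m then C $$ (i-n-m, j-n) else 0)"
  using assms unfolding calA_def block3_def append_cols_def
  by (auto simp: index_mat_four_block append_rows_def)

lemma calA1_carrier: "A \<in> carrier_mat n n \<Longrightarrow> B \<in> carrier_mat m n \<Longrightarrow> calA1 n m l A B \<in> carrier_mat (n+m+l) (n+m+l)"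
  unfolding calA1_def block3_def append_cols_def by (auto simp: append_rows_def)

lemma calA2_carrier: "C \<in> carrier_mat l m \<Longrightarrow> calA2 n m l C \<in> carrier_mat (n+m+l) (n+m+l)"
  unfolding calA2_def block3_def append_cols_def by (auto simp: append_rows_def)

lemma calA_carrier: "A \<in> carrier_mat n n \<Longrightarrow> B \<in> carrier_mat m n \<Longrightarrow> C \<in> carrier_mat l m \<Longrightarrow> calA n m l A B C \<in> carrier_mat (n+m+l) (n+m+l)"
  unfolding calA_def block3_def append_cols_def by (auto simp: append_rows_def)

lemma calA_sum:
  assumes "A \<in> carrier_mat n n" "B \<in> carrier_mat m n" "C \<in> carrier_mat l m"
  shows "calA n m l A B C = calA1 n m l A B + calA2 n m l C"
  using calA_carrier[OF assms] calA1_carrier[OF assms(1,2), of l] calA2_carrier[OF assms(3), of n]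
  by (intro eq_matI) (auto simp: calA_idx[OF assms] calA1_idx[OF assms(1,2)] calA2_idx[OF assms(3)])

lemma calA2_skew:
  assumes "C \<in> carrier_mat l m"
  shows "transpose_mat (calA2 n m l C) = - calA2 n m l C"
  using calA2_carrier[OF assms, of n]
  by (intro eq_matI) (auto simp: calA2_idx[OF assms])

lemma mat_vec_zero': "(K :: 'a::comm_semiring_1 mat) \<in> carrier_mat nr nc \<Longrightarrow> K *\<^sub>v 0\<^sub>v nc = 0\<^sub>v nr"
  by (intro eq_vecI) (auto simp: scalar_prod_def)

lemma sum_if_lt: "n \<le> (k::nat) \<Longrightarrow> (\<Sum>j\<in>{0..<k}. if j < n then f j else (0::'a::comm_monoid_add)) = (\<Sum>j\<in>{0..<n}. f j)"
proof (induct k)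
  case (Suc k)
  then show ?case by (cases "n \<le> k") (auto simp: le_Suc_eq)
qed simp

lemma calA1_sym:
  assumes A: "A \<in> carrier_mat n n" "transpose_mat A = A" and B: "B \<in> carrier_mat m n"
  shows "calA1 n m l A B + transpose_mat (calA1 n m l A B)
     = mat (n+m+l) (n+m+l) (\<lambda>(i,j). if i < n \<and> j < n then 2 * A $$ (i,j) else 0)"
proof -
  have s: "A $$ (j,i) = A $$ (i,j)" if "i < n" "j < n" for i j
    using arg_cong[OF A(2), of "\<lambda>M. M $$ (i,j)"] that A(1) by simp
  show ?thesis
  proof (rule eq_matI)
    fix i j assume i: "i < dim_row (mat (n+m+l) (n+m+l) (\<lambda>(i,j). if i < n \<and> j < n then 2 * A $$ (i,j) else (0::real)))"
      and j: "j < dim_col (mat (n+m+l) (n+m+l) (\<lambda>(i,j). if i < n \<and> j < n then 2 * A $$ (i,j) else (0::real)))"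
    have i': "i < n+m+l" and j': "j < n+m+l" using i j by auto
    have e: "(calA1 n m l A B + transpose_mat (calA1 n m l A B)) $$ (i,j) = calA1 n m l A B $$ (i,j) + calA1 n m l A B $$ (j,i)"
      using calA1_carrier[OF A(1) B, of l] i' j' by simp
    show "(calA1 n m l A B + transpose_mat (calA1 n m l A B)) $$ (i,j) = mat (n+m+l) (n+m+l) (\<lambda>(i,j). if i < n \<and> j < n then 2 * A $$ (i,j) else 0) $$ (i,j)"
    proof (cases "i < n \<and> j < n")
      case True
      then show ?thesis using s[of i j] i' j' e calA1_idx[OF A(1) B i' j'] calA1_idx[OF A(1) B j' i'] by simp
    next
      case False
      note I1 = calA1_idx[OF A(1) B i' j'] and I2 = calA1_idx[OF A(1) B j' i']
      have "calA1 n m l A B $$ (i,j) + calA1 n m l A B $$ (j,i) = 0"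
      proof (cases "i < n")
        case True
        with False have jn: "\<not> j < n" by auto
        show ?thesis
        proof (cases "j < n + m")
          case True
          then show ?thesis unfolding I1 I2 using \<open>i < n\<close> jn by simp
        next
          case False
          then show ?thesis unfolding I1 I2 using \<open>i < n\<close> jn by simp
        qed
      next
        case inn: False
        show ?thesis
        proof (cases "j < n")
          case True
          show ?thesis
          proof (cases "i < n + m")
            case True
            then show ?thesis unfolding I1 I2 using inn \<open>j < n\<close> by simp
          next
            case False
            then show ?thesis unfolding I1 I2 using inn \<open>j < n\<close> by simp
          qed
        next
          case False
          then show ?thesis unfolding I1 I2 using inn by simp
        qed
      qed
      moreover have "mat (n+m+l) (n+m+l) (\<lambda>(i,j). if i < n \<and> j < n then 2 * A $$ (i,j) else (0::real)) $$ (i,j) = 0"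
        using False i' j' by (simp; blast)
      ultimately show ?thesis using e by simp
    qed
  qed (use calA1_carrier[OF A(1) B, of l] in auto)
qed

lemma calA1_props:
  assumes SP: "sym_pos_def n A" and B: "B \<in> carrier_mat m n" and x: "x \<in> carrier_vec (n+m+l)"
  shows "x \<bullet> (calA1 n m l A B *\<^sub>v x) \<ge> 0"
    and "x \<bullet> (calA1 n m l A B *\<^sub>v x) = 0 \<Longrightarrow> transpose_mat (calA1 n m l A B) *\<^sub>v x = - (calA1 n m l A B *\<^sub>v x)"
proof -
  define N where "N = n+m+l"
  define A1 where "A1 = calA1 n m l A B"
  have A: "A \<in> carrier_mat n n" "transpose_mat A = A" and pos: "\<And>y. y \<in> carrier_vec n \<Longrightarrow> y \<noteq> 0\<^sub>v n \<Longrightarrow> y \<bullet> (A *\<^sub>v y) > 0"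
    using SP unfolding sym_pos_def_def by auto
  have A1c: "A1 \<in> carrier_mat N N" unfolding A1_def N_def by (rule calA1_carrier[OF A(1) B])
  have xc: "x \<in> carrier_vec N" using x unfolding N_def .
  define u where "u = vec n (\<lambda>i. x $ i)"
  have uc: "u \<in> carrier_vec n" unfolding u_def by simp
  define S where "S = A1 + transpose_mat A1"
  have S: "S = mat N N (\<lambda>(i,j). if i < n \<and> j < n then 2 * A $$ (i,j) else 0)"
    unfolding S_def A1_def N_def by (rule calA1_sym[OF A B])
  have Sx: "S *\<^sub>v x = vec N (\<lambda>i. if i < n then 2 * (A *\<^sub>v u) $ i else 0)"
  proof (rule eq_vecI)
    fix i assume "i < dim_vec (vec N (\<lambda>i. if i < n then 2 * (A *\<^sub>v u) $ i else 0))"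
    then have i: "i < N" by simp
    have "(S *\<^sub>v x) $ i = (\<Sum>j\<in>{0..<N}. (if i < n \<and> j < n then 2 * A $$ (i,j) else 0) * x $ j)"
      unfolding S using i xc by (simp add: scalar_prod_def)
    also have "\<dots> = (if i < n then (\<Sum>j\<in>{0..<N}. if j < n then 2 * A $$ (i,j) * x $ j else 0) else 0)"
      by (auto intro: sum.cong)
    also have "\<dots> = (if i < n then (\<Sum>j\<in>{0..<n}. 2 * A $$ (i,j) * x $ j) else 0)"
      using sum_if_lt[of n N "\<lambda>j. 2 * A $$ (i,j) * x $ j"] unfolding N_def by simp
    also have "\<dots> = (if i < n then 2 * (A *\<^sub>v u) $ i else 0)"
      using A(1) unfolding u_def by (auto simp: scalar_prod_def sum_distrib_left mult.assoc intro: sum.cong)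
    finally show "(S *\<^sub>v x) $ i = vec N (\<lambda>i. if i < n then 2 * (A *\<^sub>v u) $ i else 0) $ i" using i by simp
  qed (use S in simp)
  have xSx: "x \<bullet> (S *\<^sub>v x) = 2 * (u \<bullet> (A *\<^sub>v u))"
  proof -
    have "x \<bullet> (S *\<^sub>v x) = (\<Sum>i\<in>{0..<N}. x $ i * (if i < n then 2 * (A *\<^sub>v u) $ i else 0))"
      unfolding Sx by (simp add: scalar_prod_def)
    also have "\<dots> = (\<Sum>i\<in>{0..<N}. if i < n then 2 * (x $ i * (A *\<^sub>v u) $ i) else 0)"
      by (auto intro: sum.cong)
    also have "\<dots> = (\<Sum>i\<in>{0..<n}. 2 * (x $ i * (A *\<^sub>v u) $ i))"
      using sum_if_lt[of n N "\<lambda>i. 2 * (x $ i * (A *\<^sub>v u) $ i)"] unfolding N_def by simp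
    also have "\<dots> = 2 * (u \<bullet> (A *\<^sub>v u))"
      using A(1) unfolding u_def by (simp add: scalar_prod_def sum_distrib_left)
    finally show ?thesis .
  qed
  have xA1x: "x \<bullet> (S *\<^sub>v x) = 2 * (x \<bullet> (A1 *\<^sub>v x))"
  proof -
    have "x \<bullet> (S *\<^sub>v x) = x \<bullet> (A1 *\<^sub>v x) + x \<bullet> (transpose_mat A1 *\<^sub>v x)"
      unfolding S_def using A1c xc by (simp add: add_mult_distrib_mat_vec[of _ N N] scalar_prod_add_distrib[of _ N])
    also have "x \<bullet> (transpose_mat A1 *\<^sub>v x) = (transpose_mat A1 *\<^sub>v x) \<bullet> x"
      using A1c xc by (intro comm_scalar_prod[of _ N]) auto
    also have "\<dots> = x \<bullet> (A1 *\<^sub>v x)" by (rule transpose_vec_mult_scalar[OF A1c xc xc])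
    finally show ?thesis by simp
  qed
  have uAu: "u \<bullet> (A *\<^sub>v u) \<ge> 0"
  proof (cases "u = 0\<^sub>v n")
    case True
    then show ?thesis using mat_vec_zero'[OF A(1)] by (simp add: scalar_prod_def)
  next
    case False
    then show ?thesis using pos[OF uc] by simp
  qed
  show "x \<bullet> (calA1 n m l A B *\<^sub>v x) \<ge> 0" using xSx xA1x uAu unfolding A1_def by simp
  assume "x \<bullet> (calA1 n m l A B *\<^sub>v x) = 0"
  then have "u \<bullet> (A *\<^sub>v u) = 0" using xSx xA1x unfolding A1_def by simp
  then have "u = 0\<^sub>v n" using pos[OF uc] by force
  then have "A *\<^sub>v u = 0\<^sub>v n" using mat_vec_zero'[OF A(1)] by simp
  then have "S *\<^sub>v x = 0\<^sub>v N" unfolding Sx by (intro eq_vecI) auto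
  then have "A1 *\<^sub>v x + transpose_mat A1 *\<^sub>v x = 0\<^sub>v N"
    unfolding S_def using A1c xc by (simp add: add_mult_distrib_mat_vec[of _ N N])
  then have h: "(A1 *\<^sub>v x + transpose_mat A1 *\<^sub>v x) $ i = 0" if "i < N" for i using that by simp
  show "transpose_mat (calA1 n m l A B) *\<^sub>v x = - (calA1 n m l A B *\<^sub>v x)"
    unfolding A1_def[symmetric]
  proof (rule eq_vecI)
    fix i assume "i < dim_vec (- (A1 *\<^sub>v x))"
    then have i: "i < N" using A1c by simp
    show "(transpose_mat A1 *\<^sub>v x) $ i = (- (A1 *\<^sub>v x)) $ i" using h[OF i] i A1c by simp
  qed (use A1c in simp)
qed


theorem mainTheorem1:
  fixes n m l :: nat and A B C :: "real mat" and \<alpha> :: real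
  assumes "n > 0" and "m > 0" and "l > 0"
    and "sym_pos_def n A"
    and "B \<in> carrier_mat m n"
    and "C \<in> carrier_mat l m"
    and "\<not> invertible_mat (calA n m l A B C)"
    and "\<alpha> > 0"
  shows "mat_index (1\<^sub>m (n + m + l) - T_apss n m l A B C \<alpha>) = 1"
proof -
  have A: "A \<in> carrier_mat n n" using assms(4) unfolding sym_pos_def_def by auto
  obtain v where v: "v \<in> carrier_vec (n+m+l)" "v \<noteq> 0\<^sub>v (n+m+l)" "calA n m l A B C *\<^sub>v v = 0\<^sub>v (n+m+l)"
    using not_inv_ker[OF calA_carrier[OF A assms(5,6)] assms(7)] by blast
  have v3: "(calA1 n m l A B + calA2 n m l C) *\<^sub>v v = 0\<^sub>v (n+m+l)"
    using v(3) unfolding calA_sum[OF A assms(5,6)] .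
  show ?thesis unfolding T_apss_def Let_def
    by (rule core[OF calA1_carrier[OF A assms(5)] calA2_carrier[OF assms(6)] assms(8)
          calA1_props(1)[OF assms(4) assms(5)] calA1_props(2)[OF assms(4) assms(5)]
          calA2_skew[OF assms(6)] v(1) v(2) v3])
qed

end
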